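(* Let $m\in\mathbb N$. Let $\mathbf X=(X_1,\dots,X_n)$ be (possibly dependent) component lifetimes and $\mathbf Y_i=(Y_{i1},\dots,Y_{in})$, $i=1,\dots,m$, be vectors of spare lifetimes, all $X_j$ and $Y_{ij}$ identically distributed as $X$. Let $T_C=\tau(\mathbf Z)$, where $Z_j=\max\{X_j,Y_{1j},\dots,Y_{mj}\}$ with $X_j,Y_{1j},\dots,Y_{mj}$ independent, and $T_S=\max\{\tau(\mathbf X),\tau(\mathbf Y_1),\dots,\tau(\mathbf Y_m)\}$ with $\tau(\mathbf X),\tau(\mathbf Y_1),\dots,\tau(\mathbf Y_m)$ independent, where $\tau$ is a coherent structure and $\tau(\mathbf X),\tau(\mathbf Y_i),\tau(\mathbf Z)$ all have the same domination function $h$; thus $\bar F_{T_C}(x)=h\big(1-(1-\bar F_X(x))^{m+1}\big)$ and $F_{T_S}(x)=\big(1-h(\bar F_X(x))\big)^{m+1}$. Let $R(p)=(1-p)h'(p)/(1-h(p))$, $p\in(0,1)$. Then $T_S\underset{b}{\prec}T_C$ holds if and only if $R(p)/R\big(1-(1-p)^{m+1}\big)$ is increasing in $p\in(0,1)$.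
   Context: All random variables are non-negative and absolutely continuous with support $[0,\infty)$. For a random variable $W$: density $f_W$, cdf $F_W$, survival $\bar F_W=1-F_W$, reversed hazard rate $\tilde r_W=f_W/F_W$. $U\underset{b}{\prec}V$ means $\tilde r_U(x)/\tilde r_V(x)$ is decreasing in $x\ge0$. The domination function $h:[0,1]\to[0,1]$ of a coherent system whose components have common marginal survival function $\bar G$ is the function (depending on structure and survival copula) with system reliability $h(\bar G(x))$; it is increasing, continuous, $h(0)=0$, $h(1)=1$, assumed differentiable. "Increasing" means non-decreasing, "decreasing" means non-increasing. *)

theory Defs
  imports "HOL-Analysis.Analysis"
begin

definition rev_hazard :: "(real \<Rightarrow> real) \<Rightarrow> real \<Rightarrow> real" where
  "rev_hazard G x = deriv G x / G x"

definition rhr_ratio_order :: "(real \<Rightarrow> real) \<Rightarrow> (real \<Rightarrow> real) \<Rightarrow> bool" where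
  "rhr_ratio_order U V \<longleftrightarrow>
     (\<forall>x y. 0 < x \<longrightarrow> x \<le> y \<longrightarrow>
        rev_hazard U y / rev_hazard V y \<le> rev_hazard U x / rev_hazard V x)"

definition cdf_TC :: "(real \<Rightarrow> real) \<Rightarrow> (real \<Rightarrow> real) \<Rightarrow> nat \<Rightarrow> real \<Rightarrow> real" where
  "cdf_TC F h m x = 1 - h (1 - (1 - (1 - F x)) ^ Suc m)"

definition cdf_TS :: "(real \<Rightarrow> real) \<Rightarrow> (real \<Rightarrow> real) \<Rightarrow> nat \<Rightarrow> real \<Rightarrow> real" where
  "cdf_TS F h m x = (1 - h (1 - F x)) ^ Suc m"

definition Rfun :: "(real \<Rightarrow> real) \<Rightarrow> real \<Rightarrow> real" where
  "Rfun h p = (1 - p) * deriv h p / (1 - h p)"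

end

theory Submission
  imports Defs
begin

lemma alg:
  fixes c f dp dq A B :: real and m :: nat
  assumes "0 < c" "0 < A" "0 < B" "0 < f"
  shows "(real (Suc m) * A ^ m * (- (dp * - f)) / A ^ Suc m) /
         (- (dq * - (real (Suc m) * c ^ m * f)) / B) =
         (c * dp / A) / (c ^ Suc m * dq / B)"
proof -
  have p: "A ^ m > 0" "c ^ m > 0" using assms by auto
  have "(real (Suc m) * A ^ m * (- (dp * - f)) / A ^ Suc m) = real (Suc m) * f * (dp / A)"
    using p assms by (simp add: field_simps)
  moreover have "- (dq * - (real (Suc m) * c ^ m * f)) / B = real (Suc m) * f * (c^m * dq / B)"
    by (simp add: field_simps)
  moreover have "c * dp / A = c * (dp / A)" by simp
  moreover have "c ^ Suc m * dq / B = c * (c^m * dq / B)" by (simp add: field_simps)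
  ultimately show ?thesis using assms by (simp only:) (simp add: divide_simps)
qed

theorem theorem4p2:
  fixes F f h :: "real \<Rightarrow> real" and m :: nat
  assumes F_zero: "\<forall>x\<le>0. F x = 0"
    and F_mono: "mono F"
    and F_cont: "continuous_on UNIV F"
    and F_lim: "(F \<longlongrightarrow> 1) at_top"
    and F_dens: "\<forall>x>0. (F has_real_derivative f x) (at x)"
    and f_pos: "\<forall>x>0. f x > 0"
    and h0: "h 0 = 0" and h1: "h 1 = 1"
    and h_mono: "mono_on {0..1} h"
    and h_cont: "continuous_on {0..1} h"
    and h_range: "\<forall>p\<in>{0..1}. h p \<in> {0..1}"
    and h_diff: "\<forall>p\<in>{0<..<1}. h differentiable (at p)"
    and h_lt1: "\<forall>p\<in>{0<..<1}. h p < 1"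
  shows "rhr_ratio_order (cdf_TS F h m) (cdf_TC F h m) \<longleftrightarrow>
         mono_on {0<..<1} (\<lambda>p. Rfun h p / Rfun h (1 - (1 - p) ^ Suc m))"
proof -
  define G where "G = (\<lambda>p. Rfun h p / Rfun h (1 - (1 - p) ^ Suc m))"
  have Fle1: "F x \<le> 1" for x
  proof -
    have "eventually (\<lambda>y. F x \<le> F y) at_top"
      using eventually_ge_at_top[of x] by eventually_elim (use F_mono in \<open>auto simp: mono_def\<close>)
    from tendsto_le[OF _ F_lim tendsto_const this] show ?thesis by simp
  qed
  have Fstrict: "F x < F y" if "0 < x" "x < y" for x y
    using that F_dens f_pos
    by (intro DERIV_pos_imp_increasing[OF that(2)]) (metis less_le_trans)
  have Fpos: "0 < F x" if "0 < x" for x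
  proof -
    have "F (x/2) < F x" using Fstrict[of "x/2" x] that by simp
    moreover have "F 0 \<le> F (x/2)" using F_mono that by (simp add: mono_def)
    ultimately show ?thesis using F_zero by simp
  qed
  have Flt1: "F x < 1" if "0 < x" for x
    using Fstrict[of x "x+1"] that Fle1[of "x+1"] by simp
  have key: "rev_hazard (cdf_TS F h m) x / rev_hazard (cdf_TC F h m) x = G (1 - F x)"
    if x: "0 < x" for x
  proof -
    define c where "c = F x"
    have c: "0 < c" "c < 1" using Fpos Flt1 x c_def by auto
    have cm: "0 < c ^ Suc m" "c ^ Suc m < 1"
      using c by (auto intro: power_less_one_iff[THEN iffD2] simp del: power_Suc)
    have dF: "(F has_real_derivative f x) (at x)" using F_dens x by auto
    have dhp: "(h has_real_derivative deriv h (1 - F x)) (at (1 - F x))"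
      using h_diff c c_def DERIV_deriv_iff_real_differentiable by auto
    have dhq: "(h has_real_derivative deriv h (1 - F x ^ Suc m)) (at (1 - F x ^ Suc m))"
      using h_diff cm c_def DERIV_deriv_iff_real_differentiable by auto
    have hp: "h (1 - c) < 1" using h_lt1 c by auto
    have hq: "h (1 - c ^ Suc m) < 1" using h_lt1 cm by auto
    have i1: "((\<lambda>x. 1 - F x) has_real_derivative (- f x)) (at x)"
      using dF by (auto intro!: derivative_eq_intros)
    have i2: "((\<lambda>x. 1 - F x ^ Suc m) has_real_derivative (- (Suc m * F x ^ m * f x))) (at x)"
      using dF by (auto intro!: derivative_eq_intros simp del: power_Suc)
    have d1: "((\<lambda>x. h (1 - F x)) has_real_derivative deriv h (1 - F x) * (- f x)) (at x)"
      using DERIV_chain2[where g="\<lambda>x. 1 - F x" and f=h and x=x, OF dhp i1] by simp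
    have d2: "((\<lambda>x. h (1 - F x ^ Suc m)) has_real_derivative
          deriv h (1 - F x ^ Suc m) * (- (Suc m * F x ^ m * f x))) (at x)"
      using DERIV_chain2[where g="\<lambda>x. 1 - F x ^ Suc m" and f=h and x=x, OF dhq i2] by simp
    have dTS: "deriv (cdf_TS F h m) x = Suc m * (1 - h (1 - F x)) ^ m * (- (deriv h (1 - F x) * (- f x)))"
      unfolding cdf_TS_def
      by (rule DERIV_imp_deriv) (use d1 in \<open>auto intro!: derivative_eq_intros simp del: power_Suc\<close>)
    have eqTC: "cdf_TC F h m = (\<lambda>x. 1 - h (1 - F x ^ Suc m))"
      unfolding cdf_TC_def by auto
    have dTC: "deriv (cdf_TC F h m) x = - (deriv h (1 - F x ^ Suc m) * (- (Suc m * F x ^ m * f x)))"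
      unfolding eqTC
      by (rule DERIV_imp_deriv) (use d2 in \<open>auto intro!: derivative_eq_intros simp del: power_Suc\<close>)
    have fx: "f x > 0" using f_pos x by auto
    show ?thesis
      unfolding rev_hazard_def dTS dTC G_def Rfun_def
      unfolding cdf_TS_def eqTC c_def[symmetric]
      using alg[where c=c and f="f x" and dp="deriv h (1 - c)" and dq="deriv h (1 - c ^ Suc m)"
          and A="1 - h (1 - c)" and B="1 - h (1 - c ^ Suc m)" and m=m] c hp hq fx
      by (simp del: power_Suc)
  qed
  have surj: "\<exists>x>0. 1 - F x = a" if a: "0 < a" "a < 1" for a
  proof -
    have "eventually (\<lambda>y. F y > 1 - a) at_top"
      using F_lim a by (intro order_tendstoD(1)) auto
    then obtain b where b: "\<And>y. y \<ge> b \<Longrightarrow> F y > 1 - a"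
      unfolding eventually_at_top_linorder by blast
    define b' where "b' = max b 0"
    have "F b' > 1 - a" using b b'_def by auto
    have "\<exists>x\<ge>0. x \<le> b' \<and> F x = 1 - a"
      apply (rule IVT)
      using F_zero a \<open>F b' > 1 - a\<close> b'_def F_cont continuous_on_eq_continuous_at[of UNIV F]
      by auto
    then obtain x where x: "x \<ge> 0" "F x = 1 - a" by blast
    have "x \<noteq> 0" using x F_zero a by auto
    then show ?thesis using x by (intro exI[of _ x]) auto
  qed
  have Fmono: "F x \<le> F y" if "x \<le> y" for x y using F_mono that by (simp add: mono_def)
  show ?thesis
    unfolding rhr_ratio_order_def G_def[symmetric]
  proof
    assume L: "\<forall>x y. 0 < x \<longrightarrow> x \<le> y \<longrightarrow>
        rev_hazard (cdf_TS F h m) y / rev_hazard (cdf_TC F h m) y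
        \<le> rev_hazard (cdf_TS F h m) x / rev_hazard (cdf_TC F h m) x"
    show "mono_on {0<..<1} G"
    proof (rule mono_onI)
      fix a b :: real assume ab: "a \<in> {0<..<1}" "b \<in> {0<..<1}" "a \<le> b"
      obtain y where y: "y > 0" "1 - F y = a" using surj[of a] ab by force
      obtain x where x: "x > 0" "1 - F x = b" using surj[of b] ab by force
      have "x \<le> y"
      proof (rule ccontr)
        assume "\<not> x \<le> y"
        then have "F y < F x" using Fstrict y by auto
        then show False using x y ab by auto
      qed
      then show "G a \<le> G b" using L x y key by metis
    qed
  next
    assume M: "mono_on {0<..<1} G"
    show "\<forall>x y. 0 < x \<longrightarrow> x \<le> y \<longrightarrow>
        rev_hazard (cdf_TS F h m) y / rev_hazard (cdf_TC F h m) y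
        \<le> rev_hazard (cdf_TS F h m) x / rev_hazard (cdf_TC F h m) x"
    proof (intro allI impI)
      fix x y :: real assume xy: "0 < x" "x \<le> y"
      have "G (1 - F y) \<le> G (1 - F x)"
        using M Fmono[OF xy(2)] Fpos Flt1 xy
        by (intro mono_onD[OF M]) auto
      then show "rev_hazard (cdf_TS F h m) y / rev_hazard (cdf_TC F h m) y
        \<le> rev_hazard (cdf_TS F h m) x / rev_hazard (cdf_TC F h m) x"
        using key xy by simp
    qed
  qed
qed

end
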